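(* Suppose $\mathcal Z$ and $\mathcal U$ are compact and contain the origin, $(A,B)$ is controllable and $(A,C)$, $(A,H)$ are observable, and the simulated ROM trajectory satisfies $\bar u_k\in\mathcal U$ and $H\bar x_k\in\mathcal Z$ for all $k\ge\underline k$. Then the set $\bar{\mathcal X}$ defined in the context is compact (every $b_{\bar x,l}$ is finite) and $\bar x_k\in\bar{\mathcal X}$ for all $k\ge\underline k$.
   Context: $A\in\mathbb R^{n\times n}$, $B\in\mathbb R^{n\times m}$, $C\in\mathbb R^{p\times n}$, $H\in\mathbb R^{o\times n}$. Polytopes $\mathcal Z=\{z:H_zz\le b_z\}\subset\mathbb R^o$ and $\mathcal U=\{u:H_uu\le b_u\}\subset\mathbb R^m$. The simulated ROM is $\bar x_{k+1}=A\bar x_k+B\bar u_k$ for all $k\ge\underline k$. Fix an integer $\bar i\ge n-1$. Let $H_{\bar x}=[I,\,-I]^T\in\mathbb R^{2n\times n}$ with rows $h_{\bar x,l}^T$, $l=1,\dots,2n$. Define $b_{\bar x,l}$ as the optimal value of the linear program: maximize $h_{\bar x,l}^T\bar x_0$ over $\bar x_0,\dots,\bar x_{\bar i}$ and $\bar u_0,\dots,\bar u_{\bar i-1}$ subject to $\bar x_{i+1}=A\bar x_i+B\bar u_i$, $\bar u_i\in\mathcal U$ for $i=0,\dots,\bar i-1$, and $H\bar x_i\in\mathcal Z$ for $i=0,\dots,\bar i$. Define $\bar{\mathcal X}=\{\bar x:H_{\bar x}\bar x\le b_{\bar x}\}$. *)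

theory Defs
  imports "HOL-Analysis.Analysis"
begin

(* Matrix power A^k for square matrices *)
primrec mpow :: "real^'n^'n \<Rightarrow> nat \<Rightarrow> real^'n^'n" where
  "mpow A 0 = mat 1"
| "mpow A (Suc k) = A ** mpow A k"

(* Polytope {z. Hp z \<le> bp} (componentwise inequality) *)
definition polytope_hrep :: "real^'d^'q \<Rightarrow> real^'q \<Rightarrow> (real^'d) set" where
  "polytope_hrep Hp bp = {z. Hp *v z \<le> bp}"

(* Kalman rank condition: rank [B, AB, ..., A^(n-1) B] = n, i.e. the columns of
   the controllability matrix span a space of dimension n *)
definition controllable :: "real^'n^'n \<Rightarrow> real^'m^'n \<Rightarrow> bool" where
  "controllable A B \<longleftrightarrow>
     dim (\<Union>k\<in>{..<CARD('n)}. columns (mpow A k ** B)) = CARD('n)"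

(* Observability rank condition: rank [C; CA; ...; CA^(n-1)] = n *)
definition observable :: "real^'n^'n \<Rightarrow> real^'n^'p \<Rightarrow> bool" where
  "observable A C \<longleftrightarrow>
     dim (\<Union>k\<in>{..<CARD('n)}. rows (C ** mpow A k)) = CARD('n)"

(* Feasible initial states of the LP: x0 such that there is a trajectory
   x_0..x_ibar, u_0..u_(ibar-1) with the ROM dynamics, u_i \<in> U, H x_i \<in> Z *)
definition lp_feasible ::
  "real^'n^'n \<Rightarrow> real^'m^'n \<Rightarrow> real^'n^'o \<Rightarrow> (real^'o) set \<Rightarrow> (real^'m) set \<Rightarrow> nat
     \<Rightarrow> (real^'n) set" where
  "lp_feasible A B H Z U ibar =
     {x0. \<exists>xs us. xs 0 = x0
        \<and> (\<forall>i<ibar. xs (Suc i) = A *v xs i + B *v us i \<and> us i \<in> U)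
        \<and> (\<forall>i\<le>ibar. H *v xs i \<in> Z)}"

(* Rows of H_xbar = [I; -I]: row l (l = 1..n) is e_l, row n+l is -e_l.
   We index them by Inl i / Inr i. *)
definition hxbar_row :: "'n + 'n \<Rightarrow> real^'n" where
  "hxbar_row l = (case l of Inl i \<Rightarrow> axis i 1 | Inr i \<Rightarrow> - axis i 1)"

(* b_{xbar,l}: optimal value of the LP maximizing h_l^T xbar_0 over the feasible set *)
definition bxbar ::
  "real^'n^'n \<Rightarrow> real^'m^'n \<Rightarrow> real^'n^'o \<Rightarrow> (real^'o) set \<Rightarrow> (real^'m) set \<Rightarrow> nat
     \<Rightarrow> 'n + 'n \<Rightarrow> real" where
  "bxbar A B H Z U ibar l = Sup ((\<lambda>x0. hxbar_row l \<bullet> x0) ` lp_feasible A B H Z U ibar)"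

definition Xbar ::
  "real^'n^'n \<Rightarrow> real^'m^'n \<Rightarrow> real^'n^'o \<Rightarrow> (real^'o) set \<Rightarrow> (real^'m) set \<Rightarrow> nat
     \<Rightarrow> (real^'n) set" where
  "Xbar A B H Z U ibar = {x. \<forall>l. hxbar_row l \<bullet> x \<le> bxbar A B H Z U ibar l}"

end

theory Submission imports Defs begin
lemma row_inner: "(M::real^'n^'m) $ q \<bullet> x = (M *v x) $ q"
  by (simp add: matrix_vector_mult_def inner_vec_def mult.commute)
lemma span_bdd:
  fixes F :: "(real^'n) set"
  assumes "v \<in> span S" and "\<And>s. s \<in> S \<Longrightarrow> \<exists>C. \<forall>x\<in>F. \<bar>s \<bullet> x\<bar> \<le> C"
  shows "\<exists>C. \<forall>x\<in>F. \<bar>v \<bullet> x\<bar> \<le> C"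
  using assms(1)
proof (induction rule: span_induct_alt)
  case base then show ?case by auto
next
  case (step c s y)
  from assms(2)[OF step(1)] obtain C1 where C1: "\<forall>x\<in>F. \<bar>s \<bullet> x\<bar> \<le> C1" by blast
  from step(2) obtain C2 where C2: "\<forall>x\<in>F. \<bar>y \<bullet> x\<bar> \<le> C2" by blast
  show ?case
  proof (intro exI ballI)
    fix x assume x: "x \<in> F"
    have "\<bar>(c *\<^sub>R s + y) \<bullet> x\<bar> \<le> \<bar>c\<bar> * \<bar>s \<bullet> x\<bar> + \<bar>y \<bullet> x\<bar>"
      by (simp add: inner_add_left abs_mult[symmetric] abs_triangle_ineq)
    also have "\<dots> \<le> \<bar>c\<bar> * C1 + C2"
      using C1 C2 x by (intro add_mono mult_left_mono) auto
    finally show "\<bar>(c *\<^sub>R s + y) \<bullet> x\<bar> \<le> \<bar>c\<bar> * C1 + C2" .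
  qed
qed

lemma obs_bounded:
  fixes A :: "real^'n^'n" and H :: "real^'n^'o" and F :: "(real^'n) set"
  assumes obs: "observable A H"
    and bd: "\<And>k. k < CARD('n) \<Longrightarrow> \<exists>M. \<forall>x\<in>F. norm (H *v (mpow A k *v x)) \<le> M"
  shows "bounded F"
proof -
  let ?S = "\<Union>k\<in>{..<CARD('n)}. rows (H ** mpow A k)"
  have "span ?S = UNIV" using obs unfolding observable_def
    by (simp add: dim_eq_full[symmetric])
  have sb: "\<exists>C. \<forall>x\<in>F. \<bar>s \<bullet> x\<bar> \<le> C" if "s \<in> ?S" for s
  proof -
    from that obtain k q where k: "k < CARD('n)" and s: "s = (H ** mpow A k) $ q"
      by (auto simp: rows_def row_def)
    from bd[OF k] obtain M where M: "\<forall>x\<in>F. norm (H *v (mpow A k *v x)) \<le> M" by blast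
    show ?thesis
    proof (intro exI ballI)
      fix x assume x: "x \<in> F"
      have "\<bar>s \<bullet> x\<bar> = \<bar>(H *v (mpow A k *v x)) $ q\<bar>"
        by (simp add: s row_inner matrix_vector_mul_assoc)
      also have "\<dots> \<le> norm (H *v (mpow A k *v x))" by (rule component_le_norm_cart)
      also have "\<dots> \<le> M" using M x by blast
      finally show "\<bar>s \<bullet> x\<bar> \<le> M" .
    qed
  qed
  have "\<forall>j. \<exists>C. \<forall>x\<in>F. \<bar>axis j 1 \<bullet> x\<bar> \<le> C"
    using span_bdd[OF _ sb] \<open>span ?S = UNIV\<close> by blast
  then obtain C where C: "\<And>j x. x \<in> F \<Longrightarrow> \<bar>axis j 1 \<bullet> x\<bar> \<le> C j" by metis
  have "F \<subseteq> cbox (\<chi> j. - C j) (\<chi> j. C j)"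
  proof
    fix x assume x: "x \<in> F"
    have "\<bar>x $ j\<bar> \<le> C j" for j using C[OF x, of j] by (simp add: inner_axis')
    then show "x \<in> cbox (\<chi> j. - C j) (\<chi> j. C j)" by (auto simp: mem_box_cart abs_le_iff) (smt (verit))
  qed
  then show ?thesis using bounded_cbox bounded_subset by blast
qed
lemma mpow_Suc_v: "mpow A (Suc i) *v x = A *v (mpow A i *v x)"
  by (simp add: matrix_vector_mul_assoc)

lemma traj_bound:
  fixes A :: "real^'n^'n" and B :: "real^'m^'n" and U :: "(real^'m) set"
  assumes U: "bounded U"
  shows "\<exists>R. \<forall>xs us. (\<forall>j<i. xs (Suc j) = A *v xs j + B *v us j \<and> us j \<in> U)
            \<longrightarrow> norm (xs i - mpow A i *v xs 0) \<le> R"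
proof (induction i)
  case 0 then show ?case by auto
next
  case (Suc i)
  then obtain R where R: "\<And>xs us. (\<forall>j<i. xs (Suc j) = A *v xs j + B *v us j \<and> us j \<in> U)
            \<Longrightarrow> norm (xs i - mpow A i *v xs 0) \<le> R" by blast
  obtain KA where KA: "\<And>y. norm (A *v y) \<le> norm y * KA"
    using bounded_linear.bounded[OF matrix_vector_mul_bounded_linear] by blast
  obtain KB where KB: "\<And>y. norm (B *v y) \<le> norm y * KB" and KB0: "KB \<ge> 0"
    using bounded_linear.nonneg_bounded[OF matrix_vector_mul_bounded_linear] by blast
  obtain Ub where Ub: "\<And>u. u \<in> U \<Longrightarrow> norm u \<le> Ub" using U bounded_iff by blast
  show ?case
  proof (intro exI allI impI)
    fix xs us assume tr: "\<forall>j<Suc i. xs (Suc j) = A *v xs j + B *v us j \<and> us j \<in> U"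
    have Ri: "norm (xs i - mpow A i *v xs 0) \<le> R" using tr by (intro R) auto
    have eq: "xs (Suc i) - mpow A (Suc i) *v xs 0 = A *v (xs i - mpow A i *v xs 0) + B *v us i"
      using tr by (simp only: mpow_Suc_v) (simp add: matrix_vector_right_distrib matrix_vector_mult_diff_distrib)
    have "norm (xs (Suc i) - mpow A (Suc i) *v xs 0)
        \<le> norm (A *v (xs i - mpow A i *v xs 0)) + norm (B *v us i)"
      unfolding eq by (rule norm_triangle_ineq)
    also have "\<dots> \<le> \<bar>KA\<bar> * R + Ub * KB"
    proof (rule add_mono)
      have "norm (A *v (xs i - mpow A i *v xs 0)) \<le> norm (xs i - mpow A i *v xs 0) * KA" by (rule KA)
      also have "\<dots> \<le> norm (xs i - mpow A i *v xs 0) * \<bar>KA\<bar>" by (simp add: mult_left_mono)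
      also have "\<dots> \<le> R * \<bar>KA\<bar>" using Ri by (simp add: mult_right_mono)
      finally show "norm (A *v (xs i - mpow A i *v xs 0)) \<le> \<bar>KA\<bar> * R" by (simp add: mult.commute)
      have "norm (B *v us i) \<le> norm (us i) * KB" by (rule KB)
      also have "\<dots> \<le> Ub * KB" using Ub tr KB0 by (simp add: mult_right_mono)
      finally show "norm (B *v us i) \<le> Ub * KB" .
    qed
    finally show "norm (xs (Suc i) - mpow A (Suc i) *v xs 0) \<le> \<bar>KA\<bar> * R + Ub * KB" .
  qed
qed
theorem proposition1:
  fixes A :: "real^'n^'n" and B :: "real^'m^'n" and C :: "real^'n^'p" and H :: "real^'n^'o"
    and Hz :: "real^'o^'qz" and bz :: "real^'qz"
    and Hu :: "real^'m^'qu" and bu :: "real^'qu"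
    and xbar :: "nat \<Rightarrow> real^'n" and ubar :: "nat \<Rightarrow> real^'m"
    and k0 :: nat and ibar :: nat
  assumes ibar: "ibar \<ge> CARD('n) - 1"
    and Zc: "compact (polytope_hrep Hz bz)" and Z0: "0 \<in> polytope_hrep Hz bz"
    and Uc: "compact (polytope_hrep Hu bu)" and U0: "0 \<in> polytope_hrep Hu bu"
    and ctrb: "controllable A B"
    and obsC: "observable A C"
    and obsH: "observable A H"
    and dyn: "\<And>k. k \<ge> k0 \<Longrightarrow> xbar (Suc k) = A *v xbar k + B *v ubar k"
    and uin: "\<And>k. k \<ge> k0 \<Longrightarrow> ubar k \<in> polytope_hrep Hu bu"
    and zin: "\<And>k. k \<ge> k0 \<Longrightarrow> H *v xbar k \<in> polytope_hrep Hz bz"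
  shows "(\<forall>l. lp_feasible A B H (polytope_hrep Hz bz) (polytope_hrep Hu bu) ibar \<noteq> {}
              \<and> bdd_above ((\<lambda>x0. hxbar_row l \<bullet> x0) `
                    lp_feasible A B H (polytope_hrep Hz bz) (polytope_hrep Hu bu) ibar))
       \<and> compact (Xbar A B H (polytope_hrep Hz bz) (polytope_hrep Hu bu) ibar)
       \<and> (\<forall>k\<ge>k0. xbar k \<in> Xbar A B H (polytope_hrep Hz bz) (polytope_hrep Hu bu) ibar)"
proof -
  define Z where "Z = polytope_hrep Hz bz"
  define U where "U = polytope_hrep Hu bu"
  define F where "F = lp_feasible A B H Z U ibar"
  define b where "b = bxbar A B H Z U ibar"
  have Ub: "bounded U" using Uc compact_imp_bounded unfolding U_def by blast
  obtain Zb where Zb: "\<And>z. z \<in> Z \<Longrightarrow> norm z \<le> Zb"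
    using Zc compact_imp_bounded bounded_iff unfolding Z_def by metis
  obtain KH where KH: "\<And>y. norm (H *v y) \<le> norm y * KH" and KH0: "KH \<ge> 0"
    using bounded_linear.nonneg_bounded[OF matrix_vector_mul_bounded_linear] by blast
  (* feasibility of trajectories from xbar k *)
  have xF: "xbar k \<in> F" if "k \<ge> k0" for k
    unfolding F_def lp_feasible_def
    by (rule CollectI, rule exI[of _ "\<lambda>i. xbar (k+i)"], rule exI[of _ "\<lambda>i. ubar (k+i)"])
       (use that dyn uin zin in \<open>auto simp: U_def Z_def\<close>)
  have Fne: "F \<noteq> {}" using xF by blast
  have bF: "bounded F"
  proof (rule obs_bounded[OF obsH])
    fix k assume k: "k < CARD('n)"
    then have kle: "k \<le> ibar" using ibar by linarith
    obtain R where R: "\<And>xs us. (\<forall>j<k. xs (Suc j) = A *v xs j + B *v us j \<and> us j \<in> U)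
            \<Longrightarrow> norm (xs k - mpow A k *v xs 0) \<le> R"
      using traj_bound[OF Ub, of k A B] by blast
    show "\<exists>M. \<forall>x\<in>F. norm (H *v (mpow A k *v x)) \<le> M"
    proof (intro exI ballI)
      fix x assume "x \<in> F"
      then obtain xs us where x: "xs 0 = x"
        and tr: "\<forall>i<ibar. xs (Suc i) = A *v xs i + B *v us i \<and> us i \<in> U"
        and hz: "\<forall>i\<le>ibar. H *v xs i \<in> Z"
        unfolding F_def lp_feasible_def by blast
      have e: "H *v (mpow A k *v x) = H *v xs k - H *v (xs k - mpow A k *v xs 0)"
        by (simp add: x matrix_vector_mult_diff_distrib)
      have "norm (H *v (mpow A k *v x)) \<le> norm (H *v xs k) + norm (H *v (xs k - mpow A k *v xs 0))"
        unfolding e by (rule norm_triangle_ineq4)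
      also have "\<dots> \<le> Zb + R * KH"
      proof (rule add_mono)
        show "norm (H *v xs k) \<le> Zb" using Zb hz kle by blast
        have "norm (H *v (xs k - mpow A k *v xs 0)) \<le> norm (xs k - mpow A k *v xs 0) * KH" by (rule KH)
        also have "\<dots> \<le> R * KH" using R[of xs us] tr kle KH0 by (intro mult_right_mono) auto
        finally show "norm (H *v (xs k - mpow A k *v xs 0)) \<le> R * KH" .
      qed
      finally show "norm (H *v (mpow A k *v x)) \<le> Zb + R * KH" .
    qed
  qed
  have bdd: "bdd_above ((\<lambda>x0. hxbar_row l \<bullet> x0) ` F)" for l
    by (rule bounded_imp_bdd_above, rule bounded_linear_image[OF bF])
       (rule bounded_linear_inner_right)
  have inX: "x \<in> Xbar A B H Z U ibar" if "x \<in> F" for x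
    unfolding Xbar_def bxbar_def F_def[symmetric]
    using bdd that by (auto intro: cSup_upper)
  have row1: "hxbar_row (Inl i) \<bullet> x = x $ i" for i and x :: "real^'n"
    by (simp add: hxbar_row_def inner_axis')
  have row2: "hxbar_row (Inr i) \<bullet> x = - x $ i" for i and x :: "real^'n"
    by (simp add: hxbar_row_def inner_axis')
  have cl: "closed (Xbar A B H Z U ibar)"
    unfolding Xbar_def by (intro closed_Collect_all closed_Collect_le continuous_intros)
  have "Xbar A B H Z U ibar \<subseteq> cbox (\<chi> i. - b (Inr i)) (\<chi> i. b (Inl i))"
  proof
    fix x assume x: "x \<in> Xbar A B H Z U ibar"
    have "x $ i \<le> b (Inl i)" "- x $ i \<le> b (Inr i)" for i
      using x[unfolded Xbar_def, simplified, THEN spec, of "Inl i"]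
        x[unfolded Xbar_def, simplified, THEN spec, of "Inr i"]
      by (auto simp: row1 row2 b_def)
    then show "x \<in> cbox (\<chi> i. - b (Inr i)) (\<chi> i. b (Inl i))"
      by (auto simp: mem_box_cart) (smt (verit))
  qed
  then have "bounded (Xbar A B H Z U ibar)" using bounded_cbox bounded_subset by blast
  then have "compact (Xbar A B H Z U ibar)" using cl compact_eq_bounded_closed by blast
  then show ?thesis using Fne bdd inX xF unfolding Z_def U_def F_def by (auto intro: inX xF)
qed
end
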